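(* Let $(X,d)$ be a compact metric space and $\Omega\subset X$ a nonempty open set. Let $f:\overline\Omega\to\mathbb{R}$ be continuous such that $s[f]:\Omega\to\mathbb{R}$ is continuous with $\inf_\Omega s[f]>0$, and set $\ell:=s[f]$. Then $\partial\Omega\neq\emptyset$ and for every $x\in\Omega$, \[ f(x)=\inf\Big\{\int_0^T\ell(\gamma(s))\,ds+f(\gamma(T)) : T>0,\ \gamma\in\mathrm{Lip}_1([0,T],\overline\Omega),\ \gamma(0)=x,\ \gamma(T)\in\partial\Omega,\ \gamma([0,T))\subset\Omega\Big\}. \] Moreover, for every $x\in\Omega$ there is a $1$-Lipschitz curve $\gamma:[0,T]\to\overline\Omega$ attaining this infimum.
   Context: $\mathrm{Lip}_1([0,T],Y)$ denotes the $1$-Lipschitz curves $[0,T]\to Y$. For a function $u$ on a metric space and a point $\bar x$, the local slope is $s[u](\bar x):=\limsup_{x\to\bar x}\frac{\max\{u(\bar x)-u(x),0\}}{d(\bar x,x)}$ (zero if $\bar x$ is isolated); here $s[f]$ is computed for $f$ on the metric space $\overline\Omega$. Convention $\inf\emptyset=+\infty$. *)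

theory Defs
  imports "HOL-Analysis.Analysis"
begin

definition local_slope :: "('a::metric_space \<Rightarrow> real) \<Rightarrow> 'a set \<Rightarrow> 'a \<Rightarrow> ereal" where
  "local_slope u S xb =
     (if xb islimpt S
      then Limsup (at xb within S) (\<lambda>x. ereal (max (u xb - u x) 0 / dist xb x))
      else 0)"

definition admissible_curves :: "'a::metric_space set \<Rightarrow> 'a \<Rightarrow> (real \<times> (real \<Rightarrow> 'a)) set" where
  "admissible_curves \<Omega> x =
     {(T, \<gamma>). T > 0 \<and> 1-lipschitz_on {0..T} \<gamma> \<and> \<gamma> ` {0..T} \<subseteq> closure \<Omega> \<and>
              \<gamma> 0 = x \<and> \<gamma> T \<in> frontier \<Omega> \<and> \<gamma> ` {0..<T} \<subseteq> \<Omega>}"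

definition curve_cost :: "('a \<Rightarrow> real) \<Rightarrow> ('a \<Rightarrow> real) \<Rightarrow> real \<Rightarrow> (real \<Rightarrow> 'a) \<Rightarrow> ereal" where
  "curve_cost l f T \<gamma> =
     enn2ereal (\<integral>\<^sup>+ s\<in>{0..T}. ennreal (l (\<gamma> s)) \<partial>lborel) + ereal (f (\<gamma> T))"

end

theory Submission imports Defs begin

lemma cfun: assumes "compact (UNIV :: 'a::metric_space set)" shows "compact (UNIV :: (real \<Rightarrow> 'a) set)"
proof -
  have "compact_space (euclidean :: 'a topology)" using assms
    by (simp add: compact_space_def compactin_euclidean_iff)
  then have "compact_space (product_topology (\<lambda>i::real. euclidean :: 'a topology) UNIV)"
    by (simp add: compact_space_product_topology)
  then show ?thesis by (simp add: euclidean_product_topology compact_space_def compactin_euclidean_iff)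
qed

lemma cluster:
  fixes \<Gamma> :: "nat \<Rightarrow> 'b::topological_space"
  assumes "compact (UNIV::'b set)"
  shows "\<exists>g. \<forall>U. open U \<longrightarrow> g \<in> U \<longrightarrow> (\<forall>N. \<exists>n\<ge>N. \<Gamma> n \<in> U)"
proof -
  let ?F = "filtermap \<Gamma> sequentially"
  have "?F \<noteq> bot" by (simp add: filtermap_bot_iff)
  then obtain g where g: "inf (nhds g) ?F \<noteq> bot"
    using compact_filter[THEN iffD1, OF assms] by auto
  show ?thesis
  proof (intro exI[of _ g] allI impI, rule ccontr)
    fix U N assume U: "open U" "g \<in> U" and nn: "\<not> (\<exists>n\<ge>N. \<Gamma> n \<in> U)"
    have e1: "eventually (\<lambda>y. y \<in> U) (nhds g)" using U eventually_nhds by blast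
    have e2: "eventually (\<lambda>y. y \<notin> U) ?F"
      using nn by (auto simp: eventually_filtermap eventually_sequentially)
    have "eventually (\<lambda>y. False) (inf (nhds g) ?F)"
      unfolding eventually_inf using e1 e2 by blast
    then show False using g by (simp add: eventually_False)
  qed
qed

lemma right_incr:
  fixes \<psi> :: "real \<Rightarrow> real"
  assumes ab: "a \<le> b" and c: "continuous_on {a..b} \<psi>"
    and loc: "\<And>s. s \<in> {a..<b} \<Longrightarrow> \<exists>\<rho>>0. \<forall>h. 0 < h \<longrightarrow> h < \<rho> \<longrightarrow> s + h \<le> b \<longrightarrow> \<psi> s \<le> \<psi> (s + h)"
  shows "\<psi> a \<le> \<psi> b"
proof -
  define A where "A = {a..b} \<inter> \<psi> -` {\<psi> a..}"
  have cl: "closed A" unfolding A_def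
    by (rule continuous_closed_preimage[OF c]) auto
  have aA: "a \<in> A" using ab by (auto simp: A_def)
  have bdd: "bdd_above A" by (auto simp: A_def bdd_above_def)
  define \<sigma> where "\<sigma> = Sup A"
  have sA: "\<sigma> \<in> A" unfolding \<sigma>_def using closed_contains_Sup[OF _ bdd cl] aA by blast
  show ?thesis
  proof (cases "\<sigma> = b")
    case True then show ?thesis using sA by (auto simp: A_def)
  next
    case False
    then have "\<sigma> \<in> {a..<b}" using sA by (auto simp: A_def)
    then obtain \<rho> where r: "\<rho> > 0" "\<forall>h. 0 < h \<longrightarrow> h < \<rho> \<longrightarrow> \<sigma> + h \<le> b \<longrightarrow> \<psi> \<sigma> \<le> \<psi> (\<sigma> + h)"
      using loc by blast
    define h where "h = min (\<rho>/2) (b - \<sigma>)"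
    have h: "0 < h" "h < \<rho>" "\<sigma> + h \<le> b" using r \<open>\<sigma> \<in> {a..<b}\<close> by (auto simp: h_def)
    have "\<sigma> + h \<in> A" using r(2) h sA by (auto simp: A_def)
    then have "\<sigma> + h \<le> \<sigma>" unfolding \<sigma>_def using bdd by (rule cSup_upper)
    then show ?thesis using h by simp
  qed
qed

lemma compare:
  fixes \<phi> g :: "real \<Rightarrow> real"
  assumes ab: "a \<le> b" and cphi: "continuous_on {a..b} \<phi>" and cg: "continuous_on {a..b} g"
    and loc: "\<And>s \<eta>. s \<in> {a..<b} \<Longrightarrow> \<eta> > 0 \<Longrightarrow> \<exists>\<rho>>0. \<forall>h. 0 < h \<longrightarrow> h < \<rho> \<longrightarrow> s + h \<le> b \<longrightarrow> h * (g s - \<eta>) \<le> \<phi> (s + h) - \<phi> s"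
  shows "integral {a..b} g \<le> \<phi> b - \<phi> a"
proof -
  have key: "\<phi> a \<le> \<phi> b - integral {a..b} g + \<epsilon> * (b - a)" if e: "\<epsilon> > 0" for \<epsilon>
  proof -
    define \<psi> where "\<psi> u = \<phi> u - integral {a..u} g + \<epsilon> * (u - a)" for u
    have ci: "continuous_on {a..b} (\<lambda>u. integral {a..u} g)"
      by (rule indefinite_integral_continuous_1[OF integrable_continuous_real[OF cg]])
    have cpsi: "continuous_on {a..b} \<psi>" unfolding \<psi>_def
      by (intro continuous_intros cphi ci)
    have "\<psi> a \<le> \<psi> b"
    proof (rule right_incr[OF ab cpsi])
      fix s assume s: "s \<in> {a..<b}"
      obtain \<rho>1 where r1: "\<rho>1 > 0" "\<forall>h. 0 < h \<longrightarrow> h < \<rho>1 \<longrightarrow> s + h \<le> b \<longrightarrow> h * (g s - \<epsilon>/2) \<le> \<phi> (s + h) - \<phi> s"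
        using loc[OF s, of "\<epsilon>/2"] e by auto
      obtain \<rho>2 where r2: "\<rho>2 > 0" "\<forall>y\<in>{a..b}. dist y s < \<rho>2 \<longrightarrow> dist (g y) (g s) < \<epsilon>/2"
        using cg s e unfolding continuous_on_iff by (metis atLeastAtMost_iff atLeastLessThan_iff half_gt_zero less_eq_real_def)
      show "\<exists>\<rho>>0. \<forall>h. 0 < h \<longrightarrow> h < \<rho> \<longrightarrow> s + h \<le> b \<longrightarrow> \<psi> s \<le> \<psi> (s + h)"
      proof (intro exI[of _ "min \<rho>1 \<rho>2"] conjI allI impI)
        show "0 < min \<rho>1 \<rho>2" using r1 r2 by simp
        fix h assume h: "0 < h" "h < min \<rho>1 \<rho>2" "s + h \<le> b"
        have int: "g integrable_on {a..b}" by (rule integrable_continuous_real[OF cg])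
        have comb: "integral {a..s} g + integral {s..s+h} g = integral {a..s+h} g"
        proof -
          have "g integrable_on {a..s+h}" using int integrable_subinterval_real h s by fastforce
          then show ?thesis using Henstock_Kurzweil_Integration.integral_combine[where a=a and c=s and b="s+h" and f=g] s h by auto
        qed
        have "integral {s..s+h} g \<le> integral {s..s+h} (\<lambda>_. g s + \<epsilon>/2)"
        proof (rule integral_le)
          show "g integrable_on {s..s+h}" using int integrable_subinterval_real h s by fastforce
          show "(\<lambda>_. g s + \<epsilon>/2) integrable_on {s..s+h}" by (rule integrable_const_ivl)
          fix y assume y: "y \<in> {s..s+h}"
          then have "dist (g y) (g s) < \<epsilon>/2" using r2 h s by (auto simp: dist_real_def)
          then show "g y \<le> g s + \<epsilon>/2" unfolding dist_real_def by linarith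
        qed
        also have "\<dots> = h * (g s + \<epsilon>/2)" using h by simp
        finally have i: "integral {s..s+h} g \<le> h * (g s + \<epsilon>/2)" .
        have p: "h * (g s - \<epsilon>/2) \<le> \<phi> (s + h) - \<phi> s" using r1 h by auto
        show "\<psi> s \<le> \<psi> (s + h)" unfolding \<psi>_def using i p comb
          by (simp add: algebra_simps)
      qed
    qed
    then show ?thesis by (simp add: \<psi>_def)
  qed
  show ?thesis
  proof (rule field_le_epsilon)
    fix e :: real assume e: "0 < e"
    have "\<phi> a \<le> \<phi> b - integral {a..b} g + (e/(b-a+1)) * (b - a)" using key[of "e/(b-a+1)"] e ab by simp
    moreover have "(e/(b-a+1)) * (b - a) \<le> e" using e ab by (simp add: field_simps)
    ultimately show "integral {a..b} g \<le> \<phi> b - \<phi> a + e" by linarith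
  qed
qed


lemma slope_nonneg: "local_slope u S p \<ge> 0"
proof (cases "p islimpt S")
  case True
  then have "at p within S \<noteq> bot" by (simp add: trivial_limit_within)
  moreover have "\<forall>\<^sub>F x in at p within S. 0 \<le> ereal (max (u p - u x) 0 / dist p x)" by simp
  ultimately have "0 \<le> Limsup (at p within S) (\<lambda>x. ereal (max (u p - u x) 0 / dist p x))"
    by (rule le_Limsup)
  then show ?thesis using True by (simp add: local_slope_def)
qed (simp add: local_slope_def)

lemma slope_ub:
  assumes "local_slope u S p = ereal L" "L > 0" "\<eta> > 0"
  shows "\<exists>\<rho>>0. \<forall>y\<in>S. dist y p < \<rho> \<longrightarrow> u p - u y \<le> (L + \<eta>) * dist p y"
proof (cases "p islimpt S")
  case True
  then have "Limsup (at p within S) (\<lambda>x. ereal (max (u p - u x) 0 / dist p x)) < ereal (L + \<eta>)"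
    using assms by (simp add: local_slope_def)
  then have "eventually (\<lambda>x. ereal (max (u p - u x) 0 / dist p x) < ereal (L + \<eta>)) (at p within S)"
    by (rule Limsup_lessD)
  then obtain d where d: "d > 0" "\<forall>y\<in>S. y \<noteq> p \<and> dist y p < d \<longrightarrow> max (u p - u y) 0 / dist p y < L + \<eta>"
    unfolding eventually_at by auto
  show ?thesis
  proof (intro exI[of _ d] conjI ballI impI)
    fix y assume y: "y \<in> S" "dist y p < d"
    show "u p - u y \<le> (L + \<eta>) * dist p y"
    proof (cases "y = p")
      case False
      then have dp: "dist p y > 0" by simp
      have "max (u p - u y) 0 / dist p y < L + \<eta>" using d y False by auto
      then have "max (u p - u y) 0 < (L + \<eta>) * dist p y" using dp by (simp add: divide_less_eq)
      then show ?thesis by linarith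
    qed simp
  qed (use d in auto)
next
  case False
  then show ?thesis using assms by (simp add: local_slope_def)
qed

lemma slope_le:
  assumes "c \<ge> 0" "\<rho> > 0" "\<forall>y\<in>S. dist y p < \<rho> \<longrightarrow> u p - u y \<le> c * dist p y"
  shows "local_slope u S p \<le> ereal c"
proof (cases "p islimpt S")
  case True
  have "eventually (\<lambda>x. ereal (max (u p - u x) 0 / dist p x) \<le> ereal c) (at p within S)"
    unfolding eventually_at
  proof (intro exI[of _ \<rho>] conjI ballI impI)
    fix y assume y: "y \<in> S" "y \<noteq> p \<and> dist y p < \<rho>"
    then have dp: "dist p y > 0" by (metis zero_less_dist_iff)
    have "max (u p - u y) 0 \<le> c * dist p y" using assms y dp by auto
    then show "ereal (max (u p - u y) 0 / dist p y) \<le> ereal c" using dp by (simp add: divide_le_eq)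
  qed (use assms in auto)
  then have "Limsup (at p within S) (\<lambda>x. ereal (max (u p - u x) 0 / dist p x)) \<le> ereal c"
    by (rule Limsup_bounded)
  then show ?thesis using True by (simp add: local_slope_def)
qed (use assms in \<open>simp add: local_slope_def\<close>)

lemma step:
  fixes \<Omega> :: "'a::metric_space set" and f l :: "'a \<Rightarrow> real"
  assumes cpt: "compact (UNIV :: 'a set)"
    and cf: "continuous_on (closure \<Omega>) f"
    and sl: "\<forall>x\<in>\<Omega>. local_slope f (closure \<Omega>) x = ereal (l x)"
    and r: "r > 0" and sub: "cball p r \<subseteq> \<Omega>" and c: "c \<ge> 0" and lc: "\<forall>y\<in>cball p r. c < l y"
  shows "\<exists>q. dist p q = r \<and> c * r \<le> f p - f q"
proof -
  define K where "K = cball p r"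
  have cK: "compact K" unfolding K_def using cpt by (simp add: closed_Int_compact[of "cball p r" UNIV, simplified])
  have neK: "K \<noteq> {}" using r by (auto simp: K_def)
  have cH: "continuous_on K (\<lambda>y. f y + c * dist p y)"
    using sub closure_subset unfolding K_def
    by (intro continuous_intros continuous_on_subset[OF cf]) auto
  obtain y where yK: "y \<in> K" and ymin: "\<forall>z\<in>K. f y + c * dist p y \<le> f z + c * dist p z"
    using continuous_attains_inf[OF cK neK cH] by blast
  show ?thesis
  proof (cases "dist p y < r")
    case True
    have "local_slope f (closure \<Omega>) y \<le> ereal c"
    proof (rule slope_le[OF c, of "r - dist p y"])
      show "0 < r - dist p y" using True by simp
      show "\<forall>z\<in>closure \<Omega>. dist z y < r - dist p y \<longrightarrow> f y - f z \<le> c * dist y z"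
      proof (intro ballI impI)
        fix z assume z: "z \<in> closure \<Omega>" "dist z y < r - dist p y"
        have "dist p z \<le> dist p y + dist y z" by (rule dist_triangle)
        then have "z \<in> K" using z by (auto simp: K_def dist_commute)
        then have "f y + c * dist p y \<le> f z + c * dist p z" using ymin by auto
        moreover have "c * dist p z \<le> c * dist p y + c * dist y z"
          using \<open>dist p z \<le> _\<close> c by (metis distrib_left mult_left_mono)
        ultimately show "f y - f z \<le> c * dist y z" by linarith
      qed
    qed
    moreover have "y \<in> \<Omega>" using yK sub K_def by auto
    ultimately have "l y \<le> c" using sl by auto
    then show ?thesis using lc yK K_def by fastforce
  next
    case False
    then have "dist p y = r" using yK by (auto simp: K_def)
    moreover have "f y + c * dist p y \<le> f p + c * dist p p" using ymin r unfolding K_def by (metis centre_in_cball less_le)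
    ultimately show ?thesis by (intro exI[of _ y]) auto
  qed
qed


lemma floor_diff_bound:
  fixes a b :: real
  shows "\<bar>real_of_int \<lfloor>a\<rfloor> - real_of_int \<lfloor>b\<rfloor>\<bar> \<le> \<bar>a - b\<bar> + 1"
  using floor_correct[of a] floor_correct[of b] by linarith

lemma telescope:
  fixes F :: "nat \<Rightarrow> real"
  assumes "\<And>j. j < k \<Longrightarrow> c \<le> F j - F (Suc j)"
  shows "real k * c \<le> F 0 - F k"
  using assms
proof (induction k)
  case (Suc k)
  then have "real k * c \<le> F 0 - F k" by auto
  moreover have "c \<le> F k - F (Suc k)" using Suc.prems by auto
  ultimately show ?case by (simp add: algebra_simps)
qed simp

lemma descent_curve:
  fixes \<Omega> :: "'a::metric_space set" and f l :: "'a \<Rightarrow> real"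
  assumes cpt: "compact (UNIV :: 'a set)" and op: "open \<Omega>"
    and cf: "continuous_on (closure \<Omega>) f"
    and sl: "\<forall>x\<in>\<Omega>. local_slope f (closure \<Omega>) x = ereal (l x)"
    and cl: "continuous_on \<Omega> l"
    and lam: "c0 > 0" "\<forall>y\<in>\<Omega>. c0 \<le> l y"
    and x: "x \<in> \<Omega>"
  shows "\<exists>\<gamma> L. L \<ge> 0 \<and> \<gamma> 0 = x \<and> (\<forall>s\<ge>0. \<forall>t\<ge>0. dist (\<gamma> s) (\<gamma> t) \<le> \<bar>s - t\<bar>)
     \<and> (\<forall>s\<ge>0. \<gamma> s \<in> closure \<Omega>) \<and> \<gamma> L \<notin> \<Omega>
     \<and> (\<forall>s\<ge>0. \<gamma> s \<in> \<Omega> \<longrightarrow> (\<forall>\<eta>>0. \<exists>\<rho>>0. \<forall>h. 0 < h \<longrightarrow> h < \<rho> \<longrightarrow>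
            h * (l (\<gamma> s) - \<eta>) \<le> f (\<gamma> s) - f (\<gamma> (s + h))))"
proof -
  have ccl: "compact (closure \<Omega>)" using cpt by (simp add: closed_Int_compact[of "closure \<Omega>" UNIV, simplified])
  obtain M where M: "\<forall>y\<in>closure \<Omega>. \<bar>f y\<bar> \<le> M"
    using compact_imp_bounded[OF compact_continuous_image[OF cf ccl]] unfolding bounded_iff by auto
  have M0: "M \<ge> 0" using M x closure_subset by force
  define m where "m p \<epsilon> = Inf (l ` cball p \<epsilon>)" for p \<epsilon>
  define nxt where "nxt \<epsilon> p = (if cball p \<epsilon> \<subseteq> \<Omega> then (SOME q. dist p q = \<epsilon> \<and> ((1-\<epsilon>) * m p \<epsilon>) * \<epsilon> \<le> f p - f q) else p)" for \<epsilon> p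
  have nxt_prop: "nxt \<epsilon> p \<in> \<Omega> \<and> dist p (nxt \<epsilon> p) \<le> \<epsilon>
      \<and> (cball p \<epsilon> \<subseteq> \<Omega> \<longrightarrow> (\<forall>a. (\<forall>y\<in>cball p \<epsilon>. a \<le> l y) \<longrightarrow> (1-\<epsilon>)*a*\<epsilon> \<le> f p - f (nxt \<epsilon> p)))
      \<and> (\<not> cball p \<epsilon> \<subseteq> \<Omega> \<longrightarrow> nxt \<epsilon> p = p)"
    if e: "0 < \<epsilon>" "\<epsilon> \<le> 1/2" and p: "p \<in> \<Omega>" for \<epsilon> p
  proof (cases "cball p \<epsilon> \<subseteq> \<Omega>")
    case True
    have ne: "l ` cball p \<epsilon> \<noteq> {}" using e by auto
    have bdd: "bdd_below (l ` cball p \<epsilon>)" using True lam by (intro bdd_belowI[of _ 0]) force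
    have mge: "m p \<epsilon> \<ge> a" if "\<forall>y\<in>cball p \<epsilon>. a \<le> l y" for a
      unfolding m_def using that ne by (intro cInf_greatest) auto
    have mpos: "m p \<epsilon> > 0" using mge[of c0] lam True by force
    have mle: "m p \<epsilon> \<le> l y" if "y \<in> cball p \<epsilon>" for y
      unfolding m_def using that bdd by (intro cInf_lower) auto
    have "\<exists>q. dist p q = \<epsilon> \<and> ((1-\<epsilon>) * m p \<epsilon>) * \<epsilon> \<le> f p - f q"
    proof (rule step[OF cpt cf sl e(1) True])
      show "0 \<le> (1-\<epsilon>) * m p \<epsilon>" using e mpos by simp
      show "\<forall>y\<in>cball p \<epsilon>. (1 - \<epsilon>) * m p \<epsilon> < l y"
      proof
        fix y assume "y \<in> cball p \<epsilon>"
        then have "m p \<epsilon> \<le> l y" by (rule mle)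
        moreover have "(1 - \<epsilon>) * m p \<epsilon> < m p \<epsilon>" using e mpos by simp
        ultimately show "(1 - \<epsilon>) * m p \<epsilon> < l y" by linarith
      qed
    qed
    then have q: "dist p (nxt \<epsilon> p) = \<epsilon> \<and> ((1-\<epsilon>) * m p \<epsilon>) * \<epsilon> \<le> f p - f (nxt \<epsilon> p)"
      unfolding nxt_def using True by (simp only: if_True) (rule someI_ex)
    have "nxt \<epsilon> p \<in> \<Omega>" using q True by (auto simp: dist_commute)
    moreover have "(1-\<epsilon>)*a*\<epsilon> \<le> f p - f (nxt \<epsilon> p)" if "\<forall>y\<in>cball p \<epsilon>. a \<le> l y" for a
    proof -
      have "(1-\<epsilon>)*a*\<epsilon> \<le> (1-\<epsilon>) * m p \<epsilon> * \<epsilon>"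
        using mge[OF that] e by (intro mult_right_mono mult_left_mono) auto
      then show ?thesis using q by linarith
    qed
    ultimately show ?thesis using q True by auto
  next
    case False
    then show ?thesis using p e by (simp add: nxt_def)
  qed
  define e where "e n = 1 / (real n + 2)" for n :: nat
  have e: "0 < e n" "e n \<le> 1/2" for n by (auto simp: e_def field_simps)
  have esmall: "\<exists>N. \<forall>n\<ge>N. e n < \<delta>" if "\<delta> > 0" for \<delta>
  proof (intro exI[of _ "nat \<lceil>1/\<delta>\<rceil>"] allI impI)
    fix n assume "nat \<lceil>1/\<delta>\<rceil> \<le> n"
    then have "1/\<delta> < real n + 2" by linarith
    then show "e n < \<delta>" using that unfolding e_def by (simp add: field_simps)
  qed
  define P where "P n i = (nxt (e n) ^^ i) x" for n i
  have P0: "P n 0 = x" for n by (simp add: P_def)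
  have PS: "P n (Suc i) = nxt (e n) (P n i)" for n i by (simp add: P_def)
  have PO: "P n i \<in> \<Omega>" for n i
    by (induction i) (use x nxt_prop e in \<open>auto simp: P0 PS\<close>)
  have NP: "nxt (e n) (P n i) \<in> \<Omega> \<and> dist (P n i) (nxt (e n) (P n i)) \<le> e n
      \<and> (cball (P n i) (e n) \<subseteq> \<Omega> \<longrightarrow> (\<forall>a. (\<forall>y\<in>cball (P n i) (e n). a \<le> l y) \<longrightarrow> (1-e n)*a*e n \<le> f (P n i) - f (nxt (e n) (P n i))))
      \<and> (\<not> cball (P n i) (e n) \<subseteq> \<Omega> \<longrightarrow> nxt (e n) (P n i) = P n i)" for n i
    by (rule nxt_prop[OF e(1) e(2) PO])
  have Pd: "dist (P n i) (P n (i + k)) \<le> real k * e n" for n i k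
  proof (induction k)
    case (Suc k)
    have "dist (P n i) (P n (i + Suc k)) \<le> dist (P n i) (P n (i + k)) + dist (P n (i+k)) (P n (i + Suc k))"
      by (rule dist_triangle)
    moreover have "dist (P n (i+k)) (P n (i + Suc k)) \<le> e n" using NP[of n "i+k"] by (simp add: PS)
    ultimately show ?case using Suc by (simp add: algebra_simps)
  qed simp
  have Pd': "dist (P n i) (P n j) \<le> \<bar>real i - real j\<bar> * e n" for n i j
  proof (cases "i \<le> j")
    case True
    then show ?thesis using Pd[of n i "j - i"] by (simp add: of_nat_diff)
  next
    case False
    then show ?thesis using Pd[of n j "i - j"] by (simp add: of_nat_diff dist_commute)
  qed
  have Pinact: "P n (i + k) = P n i" if "\<not> cball (P n i) (e n) \<subseteq> \<Omega>" for n i k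
  proof (induction k)
    case (Suc k)
    then show ?case using NP[of n "i+k"] that by (simp add: PS)
  qed simp
  have Pdesc: "real k * ((1 - e n) * a * e n) \<le> f (P n i) - f (P n (i + k))"
    if "\<And>j. j < k \<Longrightarrow> cball (P n (i+j)) (e n) \<subseteq> \<Omega> \<and> (\<forall>y\<in>cball (P n (i+j)) (e n). a \<le> l y)" for n i k a
  proof (rule telescope[where F="\<lambda>j. f (P n (i + j))", simplified])
    fix j assume "j < k"
    then show "(1 - e n) * a * e n \<le> f (P n (i + j)) - f (P n (Suc (i + j)))"
      using that[of j] NP[of n "i+j"] by (simp add: PS)
  qed
  define L where "L = 4 * M / c0 + 1"
  have L0: "L \<ge> 0" using M0 lam by (simp add: L_def)
  define \<Gamma> where "\<Gamma> n s = P n (nat \<lfloor>s / e n\<rfloor>)" for n s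
  have stop: "\<exists>y. y \<notin> \<Omega> \<and> dist (\<Gamma> n L) y \<le> e n" for n
  proof (rule ccontr)
    assume ny: "\<nexists>y. y \<notin> \<Omega> \<and> dist (\<Gamma> n L) y \<le> e n"
    define N where "N = nat \<lfloor>L / e n\<rfloor>"
    have actN: "cball (P n N) (e n) \<subseteq> \<Omega>" using ny by (auto simp: \<Gamma>_def N_def)
    have act: "cball (P n j) (e n) \<subseteq> \<Omega>" if "j \<le> N" for j
    proof (rule ccontr)
      assume nj: "\<not> cball (P n j) (e n) \<subseteq> \<Omega>"
      from Pinact[OF nj, of "N - j"] that have "P n N = P n j" by simp
      then show False using actN nj by simp
    qed
    have "real (N+1) * ((1 - e n) * c0 * e n) \<le> f (P n 0) - f (P n (0 + (N+1)))"
      proof (rule Pdesc)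
      fix j assume "j < N + 1"
      then have "cball (P n (0+j)) (e n) \<subseteq> \<Omega>" using act by simp
      then show "cball (P n (0+j)) (e n) \<subseteq> \<Omega> \<and> (\<forall>y\<in>cball (P n (0+j)) (e n). c0 \<le> l y)"
        using lam by blast
    qed
    moreover have "f (P n 0) - f (P n (0 + (N+1))) \<le> 2 * M"
      using M PO closure_subset by (smt (verit) subsetD)
    moreover have X: "real (N+1) * e n \<ge> L"
    proof -
      have "real N \<ge> L / e n - 1" unfolding N_def using L0 e[of n] by linarith
      then have "real (N+1) \<ge> L / e n" by simp
      then show "real (N+1) * e n \<ge> L" using e[of n] by (simp add: field_simps)
    qed
    moreover have "(1 - e n) * c0 \<ge> c0 / 2" using e[of n] lam by (simp add: field_simps)
    moreover have "real (N+1) * ((1 - e n) * c0 * e n) = (real (N+1) * e n) * ((1 - e n) * c0)" by simp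
    moreover have "L * (c0 / 2) = 2 * M + c0 / 2" using lam by (simp add: L_def field_simps)
    ultimately have "L * (c0/2) \<le> 2 * M"
      by (smt (verit) L0 lam(1) mult_mono)
    then show False using \<open>L * (c0 / 2) = 2 * M + c0 / 2\<close> lam by linarith
  qed
  have Gd: "dist (\<Gamma> n s) (\<Gamma> n t) \<le> \<bar>s - t\<bar> + e n" if "s \<ge> 0" "t \<ge> 0" for n s t
  proof -
    have en: "e n > 0" by (rule e)
    have "dist (\<Gamma> n s) (\<Gamma> n t) \<le> \<bar>real (nat \<lfloor>s / e n\<rfloor>) - real (nat \<lfloor>t / e n\<rfloor>)\<bar> * e n"
      unfolding \<Gamma>_def by (rule Pd')
    also have "\<bar>real (nat \<lfloor>s / e n\<rfloor>) - real (nat \<lfloor>t / e n\<rfloor>)\<bar> = \<bar>real_of_int \<lfloor>s / e n\<rfloor> - real_of_int \<lfloor>t / e n\<rfloor>\<bar>"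
      using that en by simp
    also have "\<dots> * e n \<le> (\<bar>s / e n - t / e n\<bar> + 1) * e n"
      using floor_diff_bound en by (intro mult_right_mono) auto
    also have "\<dots> = \<bar>s - t\<bar> + e n" using en
      by (simp add: distrib_right abs_mult[symmetric] diff_divide_distrib[symmetric])
    finally show ?thesis .
  qed
  obtain \<gamma> where clus: "\<forall>U. open U \<longrightarrow> \<gamma> \<in> U \<longrightarrow> (\<forall>N. \<exists>n\<ge>N. \<Gamma> n \<in> U)"
    using cluster[OF cfun[OF cpt]] by blast
  have near: "\<exists>n\<ge>N. e n < \<delta> \<and> dist (\<Gamma> n a) (\<gamma> a) < \<delta> \<and> dist (\<Gamma> n b) (\<gamma> b) < \<delta>" if d: "\<delta> > 0" for a b \<delta> N
  proof -
    obtain N1 where N1: "\<forall>n\<ge>N1. e n < \<delta>" using esmall[OF d] by blast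
    have ca: "continuous_on UNIV (\<lambda>g::real\<Rightarrow>'a. g a)" and cb: "continuous_on UNIV (\<lambda>g::real\<Rightarrow>'a. g b)" by simp_all
    have "open {g::real\<Rightarrow>'a. dist (g a) (\<gamma> a) < \<delta> \<and> dist (g b) (\<gamma> b) < \<delta>}"
      by (intro open_Collect_conj open_Collect_less continuous_on_dist ca cb continuous_on_const)
    moreover have "\<gamma> \<in> {g::real\<Rightarrow>'a. dist (g a) (\<gamma> a) < \<delta> \<and> dist (g b) (\<gamma> b) < \<delta>}" using d by simp
    ultimately obtain n where "n \<ge> max N N1" "\<Gamma> n \<in> {g::real\<Rightarrow>'a. dist (g a) (\<gamma> a) < \<delta> \<and> dist (g b) (\<gamma> b) < \<delta>}"
      using clus by blast
    then show ?thesis using N1 by (intro exI[of _ n]) auto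
  qed
  have G0: "\<gamma> 0 = x"
  proof -
    have d: "dist x (\<gamma> 0) < \<delta>" if "\<delta> > 0" for \<delta>
      using near[OF that, where a=0 and b=0 and N=0] by (auto simp: \<Gamma>_def P0)
    show ?thesis
    proof (rule ccontr)
      assume "\<gamma> 0 \<noteq> x"
      then have "dist x (\<gamma> 0) > 0" by simp
      from d[OF this] show False by simp
    qed
  qed
  have G1: "dist (\<gamma> s) (\<gamma> t) \<le> \<bar>s - t\<bar>" if st: "s \<ge> 0" "t \<ge> 0" for s t
  proof (rule field_le_epsilon)
    fix \<epsilon> :: real assume ep: "\<epsilon> > 0"
    obtain n where n: "e n < \<epsilon>/3" "dist (\<Gamma> n s) (\<gamma> s) < \<epsilon>/3" "dist (\<Gamma> n t) (\<gamma> t) < \<epsilon>/3"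
      using near[where \<delta>="\<epsilon>/3" and a=s and b=t and N=0] ep by auto
    have "dist (\<gamma> s) (\<gamma> t) \<le> dist (\<Gamma> n s) (\<gamma> s) + dist (\<Gamma> n s) (\<Gamma> n t) + dist (\<Gamma> n t) (\<gamma> t)"
      using dist_triangle[of "\<gamma> s" "\<gamma> t" "\<Gamma> n s"] dist_triangle[of "\<Gamma> n s" "\<gamma> t" "\<Gamma> n t"]
      by (simp add: dist_commute)
    then show "dist (\<gamma> s) (\<gamma> t) \<le> \<bar>s - t\<bar> + \<epsilon>" using n Gd[OF st, of n] by linarith
  qed
  have G4: "\<gamma> s \<in> closure \<Omega>" for s
    unfolding closure_approachable
  proof (intro allI impI)
    fix \<delta> :: real assume "\<delta> > 0"
    then obtain n where "dist (\<Gamma> n s) (\<gamma> s) < \<delta>" using near by blast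
    then show "\<exists>y\<in>\<Omega>. dist y (\<gamma> s) < \<delta>" using PO by (auto simp: \<Gamma>_def)
  qed
  have G3: "\<gamma> L \<notin> \<Omega>"
  proof
    assume "\<gamma> L \<in> \<Omega>"
    then obtain r where r: "r > 0" "ball (\<gamma> L) r \<subseteq> \<Omega>" using op open_contains_ball by blast
    obtain n where n: "e n < r/2" "dist (\<Gamma> n L) (\<gamma> L) < r/2" using near[where \<delta>="r/2" and a=L and b=L and N=0] r by auto
    obtain y where y: "y \<notin> \<Omega>" "dist (\<Gamma> n L) y \<le> e n" using stop by blast
    have "dist (\<gamma> L) y < r" using n y dist_triangle[of "\<gamma> L" y "\<Gamma> n L"] by (simp add: dist_commute)
    then show False using r y by auto
  qed
  have G5: "\<exists>\<rho>>0. \<forall>h. 0 < h \<longrightarrow> h < \<rho> \<longrightarrow> h * (l (\<gamma> s) - \<eta>) \<le> f (\<gamma> s) - f (\<gamma> (s + h))"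
    if s: "s \<ge> 0" "\<gamma> s \<in> \<Omega>" and eta: "\<eta> > 0" for s \<eta>
  proof -
    define p where "p = \<gamma> s"
    have pO: "p \<in> \<Omega>" using s p_def by simp
    have lp: "l p \<ge> c0" using lam pO by auto
    define \<eta>' where "\<eta>' = min \<eta> (l p / 2)"
    have e': "\<eta>' > 0" "\<eta>' \<le> \<eta>" "\<eta>' \<le> l p / 2" using eta lam lp by (auto simp: \<eta>'_def)
    define a where "a = l p - \<eta>'"
    have apos: "a > 0" using e' lp lam by (simp add: a_def)
    obtain r1 where r1: "r1 > 0" "ball p r1 \<subseteq> \<Omega>" using op pO open_contains_ball by blast
    obtain d where d: "d > 0" "\<forall>y\<in>\<Omega>. dist y p < d \<longrightarrow> dist (l y) (l p) < \<eta>'"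
      using cl pO e'(1) unfolding continuous_on_iff by blast
    define \<rho>0 where "\<rho>0 = min r1 d"
    have \<rho>0: "\<rho>0 > 0" using r1 d by (simp add: \<rho>0_def)
    have b\<rho>0: "y \<in> \<Omega> \<and> a \<le> l y" if "dist p y < \<rho>0" for y
    proof -
      have yO: "y \<in> \<Omega>" using r1 that by (auto simp: \<rho>0_def)
      moreover have "dist (l y) (l p) < \<eta>'" using d yO that by (auto simp: \<rho>0_def dist_commute)
      ultimately show ?thesis unfolding a_def dist_real_def by linarith
    qed
    have pcl: "p \<in> closure \<Omega>" using pO closure_subset by blast
    show ?thesis
    proof (intro exI[of _ "\<rho>0/4"] conjI allI impI)
      show "\<rho>0/4 > 0" using \<rho>0 by simp
      fix h assume h: "0 < h" "h < \<rho>0/4"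
      define q where "q = \<gamma> (s + h)"
      have qcl: "q \<in> closure \<Omega>" using G4 q_def by simp
      have main: "h * a \<le> f p - f q"
      proof (rule field_le_epsilon)
        fix ep :: real assume ep: "ep > 0"
        define K where "K = a + h * a + 2"
        have K: "K > 0" unfolding K_def using apos h mult_pos_pos[of h a] by linarith
        define \<delta> where "\<delta> = ep / K"
        have \<delta>: "\<delta> > 0" using ep K by (simp add: \<delta>_def)
        obtain \<theta>1 where t1: "\<theta>1 > 0" "\<forall>y\<in>closure \<Omega>. dist y p < \<theta>1 \<longrightarrow> dist (f y) (f p) < \<delta>"
          using cf pcl \<delta> unfolding continuous_on_iff by blast
        obtain \<theta>2 where t2: "\<theta>2 > 0" "\<forall>y\<in>closure \<Omega>. dist y q < \<theta>2 \<longrightarrow> dist (f y) (f q) < \<delta>"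
          using cf qcl \<delta> unfolding continuous_on_iff by blast
        define \<theta> where "\<theta> = min (min \<theta>1 \<theta>2) (min (\<rho>0/4) \<delta>)"
        have \<theta>: "\<theta> > 0" "\<theta> \<le> \<theta>1" "\<theta> \<le> \<theta>2" "\<theta> \<le> \<rho>0/4" "\<theta> \<le> \<delta>"
          using t1 t2 \<rho>0 \<delta> by (auto simp: \<theta>_def)
        obtain n where n: "e n < \<theta>" "dist (\<Gamma> n s) (\<gamma> s) < \<theta>" "dist (\<Gamma> n (s+h)) (\<gamma> (s+h)) < \<theta>"
          using near[where \<delta>=\<theta> and a=s and b="s+h" and N=0] \<theta> by auto
        define \<epsilon> where "\<epsilon> = e n"
        have \<epsilon>: "0 < \<epsilon>" "\<epsilon> \<le> 1/2" "\<epsilon> < \<theta>" using e n by (auto simp: \<epsilon>_def)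
        define i0 where "i0 = nat \<lfloor>s / \<epsilon>\<rfloor>"
        define i1 where "i1 = nat \<lfloor>(s + h) / \<epsilon>\<rfloor>"
        have fl0: "real_of_int \<lfloor>s / \<epsilon>\<rfloor> \<ge> 0" "real_of_int \<lfloor>(s+h) / \<epsilon>\<rfloor> \<ge> 0"
          using s h \<epsilon> by auto
        have i01: "i0 \<le> i1" unfolding i0_def i1_def
          using h \<epsilon> by (intro nat_mono floor_mono divide_right_mono) auto
        define k where "k = i1 - i0"
        have i1k: "i1 = i0 + k" using i01 by (simp add: k_def)
        have rk: "real k = real_of_int \<lfloor>(s + h) / \<epsilon>\<rfloor> - real_of_int \<lfloor>s / \<epsilon>\<rfloor>"
          using i01 fl0 by (simp add: k_def i0_def i1_def of_nat_diff)
        have "real k \<le> (s + h) / \<epsilon> - s / \<epsilon> + 1" "real k \<ge> (s + h) / \<epsilon> - s / \<epsilon> - 1"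
          using rk floor_correct[of "(s+h)/\<epsilon>"] floor_correct[of "s/\<epsilon>"] by linarith+
        moreover have "(s + h) / \<epsilon> - s / \<epsilon> = h / \<epsilon>" by (simp add: diff_divide_distrib[symmetric])
        ultimately have "real k \<le> h / \<epsilon> + 1" "real k \<ge> h / \<epsilon> - 1" by linarith+
        then have kub: "real k * \<epsilon> \<le> h + \<epsilon>" and klb: "real k * \<epsilon> \<ge> h - \<epsilon>"
          using \<epsilon> by (simp_all add: field_simps)
        have G0s: "\<Gamma> n s = P n i0" and G0h: "\<Gamma> n (s+h) = P n (i0 + k)"
          using i1k by (simp_all add: \<Gamma>_def i0_def i1_def \<epsilon>_def)
        have desc: "real k * ((1 - \<epsilon>) * a * \<epsilon>) \<le> f (P n i0) - f (P n (i0 + k))"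
          unfolding \<epsilon>_def
        proof (rule Pdesc)
          fix j assume j: "j < k"
          have sub: "dist p y < \<rho>0" if y: "y \<in> cball (P n (i0 + j)) (e n)" for y
          proof -
            have "dist y p \<le> dist y (P n (i0 + j)) + dist (P n (i0 + j)) (P n i0) + dist (P n i0) p"
              using dist_triangle[of y p "P n (i0+j)"] dist_triangle[of "P n (i0+j)" p "P n i0"] by linarith
            moreover have "dist y (P n (i0 + j)) \<le> \<epsilon>" using y by (simp add: \<epsilon>_def dist_commute)
            moreover have "dist (P n (i0 + j)) (P n i0) \<le> real j * \<epsilon>"
              using Pd[of n i0 j] by (simp add: \<epsilon>_def dist_commute)
            moreover have "real j * \<epsilon> < real k * \<epsilon>" using j \<epsilon> by simp
            moreover have "dist (P n i0) p < \<theta>" using n(2) G0s p_def by simp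
            ultimately have "dist y p < \<epsilon> + (h + \<epsilon>) + \<theta>" using kub by linarith
            then show ?thesis using \<epsilon> \<theta> h by (simp add: dist_commute)
          qed
          show "cball (P n (i0 + j)) (e n) \<subseteq> \<Omega> \<and> (\<forall>y\<in>cball (P n (i0 + j)) (e n). a \<le> l y)"
            using sub b\<rho>0 by blast
        qed
        have f1: "f (P n i0) \<le> f p + \<delta>"
        proof -
          have "P n i0 \<in> closure \<Omega>" using PO closure_subset by blast
          moreover have "dist (P n i0) p < \<theta>1" using n(2) G0s p_def \<theta> by simp
          ultimately have "dist (f (P n i0)) (f p) < \<delta>" using t1 by blast
          then show ?thesis by (simp add: dist_real_def)
        qed
        have f2: "f (P n (i0 + k)) \<ge> f q - \<delta>"
        proof -
          have "P n (i0 + k) \<in> closure \<Omega>" using PO closure_subset by blast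
          moreover have "dist (P n (i0 + k)) q < \<theta>2" using n(3) G0h q_def \<theta> by simp
          ultimately have "dist (f (P n (i0 + k))) (f q) < \<delta>" using t2 by blast
          then show ?thesis by (simp add: dist_real_def)
        qed
        have m1: "real k * ((1 - \<epsilon>) * a * \<epsilon>) = (real k * \<epsilon>) * ((1 - \<epsilon>) * a)" by simp
        have m2: "(real k * \<epsilon>) * ((1 - \<epsilon>) * a) \<ge> (h - \<epsilon>) * ((1 - \<epsilon>) * a)"
          using klb \<epsilon> apos by (intro mult_right_mono) auto
        have m3: "(h - \<epsilon>) * ((1 - \<epsilon>) * a) = h * a - \<epsilon> * (a + h * a) + \<epsilon> * \<epsilon> * a"
          by (simp add: algebra_simps)
        have m4: "\<epsilon> * (a + h * a) \<le> \<delta> * (a + h * a)"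
          using \<epsilon> \<theta> apos h by (intro mult_right_mono) auto
        have m5: "\<epsilon> * \<epsilon> * a \<ge> 0" using \<epsilon> apos by simp
        have m6: "\<delta> * K = ep" using K by (simp add: \<delta>_def)
        show "h * a \<le> f p - f q + ep"
          using desc f1 f2 m1 m2 m3 m4 m5 m6 unfolding K_def by (simp add: algebra_simps)
      qed
      have "h * (l p - \<eta>) \<le> h * a" using h e' by (intro mult_left_mono) (auto simp: a_def)
      then show "h * (l (\<gamma> s) - \<eta>) \<le> f (\<gamma> s) - f (\<gamma> (s + h))"
        using main by (simp add: p_def q_def)
    qed
  qed
  show ?thesis
    apply (rule exI[of _ \<gamma>], rule exI[of _ L])
    using L0 G0 G1 G3 G4 G5 by simp
qed


lemma nn_eq:
  fixes g :: "real \<Rightarrow> real"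
  assumes "continuous_on {0..t} g" "\<And>s. s \<in> {0..t} \<Longrightarrow> 0 \<le> g s"
  shows "(\<integral>\<^sup>+ s\<in>{0..t}. ennreal (g s) \<partial>lborel) = ennreal (integral {0..t} g)"
proof -
  have "(g has_integral integral {0..t} g) {0..t}"
    using integrable_continuous_real[OF assms(1)] by (simp add: integrable_integral)
  then show ?thesis using nn_integral_has_integral_lebesgue'[of "{0..t}" g] assms(2) by blast
qed

lemma ug_int:
  fixes \<Omega> :: "'a::metric_space set" and f l :: "'a \<Rightarrow> real" and \<gamma> :: "real \<Rightarrow> 'a"
  assumes cf: "continuous_on (closure \<Omega>) f"
    and sl: "\<forall>x\<in>\<Omega>. local_slope f (closure \<Omega>) x = ereal (l x)"
    and cl: "continuous_on \<Omega> l" and lpos: "\<forall>y\<in>\<Omega>. l y > 0"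
    and lip: "1-lipschitz_on {0..T} \<gamma>" and im: "\<gamma> ` {0..T} \<subseteq> closure \<Omega>" and im2: "\<gamma> ` {0..<T} \<subseteq> \<Omega>"
    and t: "t \<in> {0..<T}"
  shows "f (\<gamma> 0) - f (\<gamma> t) \<le> integral {0..t} (\<lambda>s. l (\<gamma> s))"
proof -
  have cg: "continuous_on {0..T} \<gamma>" using lip by (rule lipschitz_on_continuous_on)
  have sub: "{0..t} \<subseteq> {0..T}" "{0..t} \<subseteq> {0..<T}" using t by auto
  have c1: "continuous_on {0..t} (\<lambda>u. f (\<gamma> u))"
    using continuous_on_compose2[OF cf continuous_on_subset[OF cg sub(1)]] im sub by blast
  have c2: "continuous_on {0..t} (\<lambda>u. - l (\<gamma> u))"
    using continuous_on_compose2[OF cl continuous_on_subset[OF cg sub(1)]] im2 sub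
    by (intro continuous_intros) blast
  have "integral {0..t} (\<lambda>u. - l (\<gamma> u)) \<le> f (\<gamma> t) - f (\<gamma> 0)"
  proof (rule compare[OF _ c1 c2])
    show "0 \<le> t" using t by simp
    fix s \<eta> :: real assume s: "s \<in> {0..<t}" and eta: "\<eta> > 0"
    have pO: "\<gamma> s \<in> \<Omega>" using s t im2 by auto
    obtain \<rho> where r: "\<rho> > 0" "\<forall>y\<in>closure \<Omega>. dist y (\<gamma> s) < \<rho> \<longrightarrow> f (\<gamma> s) - f y \<le> (l (\<gamma> s) + \<eta>) * dist (\<gamma> s) y"
      using slope_ub[of f "closure \<Omega>" "\<gamma> s" "l (\<gamma> s)" \<eta>] sl pO lpos eta by auto
    show "\<exists>\<rho>>0. \<forall>h. 0 < h \<longrightarrow> h < \<rho> \<longrightarrow> s + h \<le> t \<longrightarrow> h * (- l (\<gamma> s) - \<eta>) \<le> f (\<gamma> (s + h)) - f (\<gamma> s)"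
    proof (intro exI[of _ \<rho>] conjI allI impI)
      fix h assume h: "0 < h" "h < \<rho>" "s + h \<le> t"
      have d: "dist (\<gamma> (s+h)) (\<gamma> s) \<le> h"
        using lipschitz_onD[OF lip, of "s+h" s] s t h by (auto simp: dist_real_def)
      have yc: "\<gamma> (s+h) \<in> closure \<Omega>" using im s t h by auto
      have "f (\<gamma> s) - f (\<gamma> (s+h)) \<le> (l (\<gamma> s) + \<eta>) * dist (\<gamma> s) (\<gamma> (s+h))"
        using r d h yc by auto
      also have "\<dots> \<le> (l (\<gamma> s) + \<eta>) * h" using d lpos pO eta
        by (intro mult_left_mono) (auto simp: dist_commute less_imp_le)
      finally show "h * (- l (\<gamma> s) - \<eta>) \<le> f (\<gamma> (s + h)) - f (\<gamma> s)" by (simp add: algebra_simps)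
    qed (use r in auto)
  qed
  then show ?thesis by (simp add: integral_neg)
qed


theorem lemma3p1:
  fixes \<Omega> :: "'a::metric_space set" and f l :: "'a \<Rightarrow> real"
  assumes "compact (UNIV :: 'a set)"
    and "open \<Omega>" and "\<Omega> \<noteq> {}"
    and "continuous_on (closure \<Omega>) f"
    and "\<forall>x\<in>\<Omega>. local_slope f (closure \<Omega>) x = ereal (l x)"
    and "continuous_on \<Omega> l"
    and "(INF x\<in>\<Omega>. l x) > 0"
  shows "frontier \<Omega> \<noteq> {} \<and>
    (\<forall>x\<in>\<Omega>. ereal (f x) = (INF (T, \<gamma>)\<in>admissible_curves \<Omega> x. curve_cost l f T \<gamma>)) \<and>
    (\<forall>x\<in>\<Omega>. \<exists>(T, \<gamma>)\<in>admissible_curves \<Omega> x. curve_cost l f T \<gamma> = ereal (f x))"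
proof -
  note cpt = assms(1) and op = assms(2) and ne = assms(3) and cf = assms(4) and sl = assms(5)
    and cl = assms(6) and inf0 = assms(7)
  have lnn: "l y \<ge> 0" if "y \<in> \<Omega>" for y
    using slope_nonneg[of f "closure \<Omega>" y] sl that by auto
  define c0 where "c0 = (INF x\<in>\<Omega>. l x)"
  have c0: "c0 > 0" using inf0 by (simp add: c0_def)
  have c0le: "\<forall>y\<in>\<Omega>. c0 \<le> l y"
    unfolding c0_def using lnn by (intro ballI cINF_lower bdd_belowI2[of _ 0]) auto
  have lpos: "\<forall>y\<in>\<Omega>. l y > 0" using c0 c0le by force
  have ug: "ereal (f x) \<le> curve_cost l f T \<gamma>" if adm: "(T, \<gamma>) \<in> admissible_curves \<Omega> x" for x T \<gamma>
  proof -
    from adm have T: "T > 0" and lip: "1-lipschitz_on {0..T} \<gamma>" and im: "\<gamma> ` {0..T} \<subseteq> closure \<Omega>"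
      and g0: "\<gamma> 0 = x" and im2: "\<gamma> ` {0..<T} \<subseteq> \<Omega>"
      by (auto simp: admissible_curves_def)
    define I where "I = (\<integral>\<^sup>+ s\<in>{0..T}. ennreal (l (\<gamma> s)) \<partial>lborel)"
    have cg: "continuous_on {0..T} \<gamma>" using lip by (rule lipschitz_on_continuous_on)
    have cfg: "continuous_on {0..T} (\<lambda>u. f (\<gamma> u))"
      using continuous_on_compose2[OF cf cg] im by blast
    have b1: "f x - f (\<gamma> t) \<le> integral {0..t} (\<lambda>s. l (\<gamma> s))" if "t \<in> {0..<T}" for t
      using ug_int[OF cf sl cl lpos lip im im2 that] g0 by simp
    have b2: "ennreal (integral {0..t} (\<lambda>s. l (\<gamma> s))) \<le> I" if t: "t \<in> {0..<T}" for t
    proof -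
      have sub: "{0..t} \<subseteq> {0..T}" "{0..t} \<subseteq> {0..<T}" using t by auto
      have "continuous_on {0..t} (\<lambda>s. l (\<gamma> s))"
        using continuous_on_compose2[OF cl continuous_on_subset[OF cg sub(1)]] im2 sub by blast
      then have "ennreal (integral {0..t} (\<lambda>s. l (\<gamma> s))) = (\<integral>\<^sup>+ s\<in>{0..t}. ennreal (l (\<gamma> s)) \<partial>lborel)"
        using lnn im2 sub by (intro nn_eq[symmetric]) (auto simp: subset_iff image_subset_iff)
      also have "\<dots> \<le> I" unfolding I_def
        using sub by (intro nn_integral_mono) (auto simp: indicator_def)
      finally show ?thesis .
    qed
    have nn: "integral {0..t} (\<lambda>s. l (\<gamma> s)) \<ge> 0" if t: "t \<in> {0..<T}" for t
    proof (rule integral_nonneg)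
      have sub: "{0..t} \<subseteq> {0..T}" "{0..t} \<subseteq> {0..<T}" using t by auto
      have "continuous_on {0..t} (\<lambda>s. l (\<gamma> s))"
        using continuous_on_compose2[OF cl continuous_on_subset[OF cg sub(1)]] im2 sub by blast
      then show "(\<lambda>s. l (\<gamma> s)) integrable_on {0..t}" by (rule integrable_continuous_real)
      fix s assume "s \<in> {0..t}"
      then show "0 \<le> l (\<gamma> s)" using lnn im2 sub by (auto simp: subset_iff image_subset_iff)
    qed
    show ?thesis
    proof (cases I rule: ennreal_cases)
      case (real r)
      have "f x - f (\<gamma> T) \<le> r"
      proof (rule field_le_epsilon)
        fix \<epsilon> :: real assume ep: "\<epsilon> > 0"
        obtain d where d: "d > 0" "\<forall>u\<in>{0..T}. dist u T < d \<longrightarrow> dist (f (\<gamma> u)) (f (\<gamma> T)) < \<epsilon>"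
          using cfg T ep unfolding continuous_on_iff by (metis atLeastAtMost_iff less_eq_real_def order_refl)
        define u where "u = max 0 (T - d/2)"
        have u: "u \<in> {0..<T}" "dist u T < d" using T d by (auto simp: u_def dist_real_def)
        have "ennreal (integral {0..u} (\<lambda>s. l (\<gamma> s))) \<le> ennreal r" using b2[OF u(1)] real by simp
        then have "integral {0..u} (\<lambda>s. l (\<gamma> s)) \<le> r" using real(1) nn[OF u(1)] by (simp add: ennreal_le_iff)
        moreover have "dist (f (\<gamma> u)) (f (\<gamma> T)) < \<epsilon>" using d u by auto
        ultimately show "f x - f (\<gamma> T) \<le> r + \<epsilon>" using b1[OF u(1)] by (simp add: dist_real_def abs_less_iff)
      qed
      then show ?thesis using real unfolding curve_cost_def I_def[symmetric] by simp
    next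
      case top
      then show ?thesis unfolding curve_cost_def I_def[symmetric] by simp
    qed
  qed
  have opt: "\<exists>(T, \<gamma>)\<in>admissible_curves \<Omega> x. curve_cost l f T \<gamma> = ereal (f x)" if x: "x \<in> \<Omega>" for x
  proof -
    obtain \<gamma> L where L0: "L \<ge> 0" and g0: "\<gamma> 0 = x"
      and g1: "\<forall>s\<ge>0. \<forall>t\<ge>0. dist (\<gamma> s) (\<gamma> t) \<le> \<bar>s - t\<bar>"
      and g4: "\<forall>s\<ge>0. \<gamma> s \<in> closure \<Omega>" and g3: "\<gamma> L \<notin> \<Omega>"
      and g5: "\<forall>s\<ge>0. \<gamma> s \<in> \<Omega> \<longrightarrow> (\<forall>\<eta>>0. \<exists>\<rho>>0. \<forall>h. 0 < h \<longrightarrow> h < \<rho> \<longrightarrow>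
            h * (l (\<gamma> s) - \<eta>) \<le> f (\<gamma> s) - f (\<gamma> (s + h)))"
      using descent_curve[OF cpt op cf sl cl c0 c0le x] by blast
    have lipb: "1-lipschitz_on {0..b} \<gamma>" for b
      using g1 by (intro lipschitz_onI) (auto simp: dist_real_def)
    have cgb: "continuous_on {0..b} \<gamma>" for b using lipb by (rule lipschitz_on_continuous_on)
    define A where "A = {0..L} \<inter> \<gamma> -` (- \<Omega>)"
    have Acl: "closed A" unfolding A_def
      using op by (intro continuous_closed_preimage[OF cgb]) auto
    have LA: "L \<in> A" using L0 g3 by (simp add: A_def)
    have bddA: "bdd_below A" by (auto simp: A_def bdd_below_def)
    define T0 where "T0 = Inf A"
    have T0A: "T0 \<in> A" unfolding T0_def using closed_contains_Inf[OF _ bddA Acl] LA by blast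
    have T0L: "0 \<le> T0" "T0 \<le> L" "\<gamma> T0 \<notin> \<Omega>" using T0A by (auto simp: A_def)
    have T0pos: "T0 > 0"
    proof (rule ccontr)
      assume "\<not> T0 > 0"
      then have "T0 = 0" using T0L by simp
      then show False using T0L g0 x by simp
    qed
    have inO: "\<gamma> s \<in> \<Omega>" if s: "s \<in> {0..<T0}" for s
    proof (rule ccontr)
      assume "\<gamma> s \<notin> \<Omega>"
      then have "s \<in> A" using s T0L by (auto simp: A_def)
      then have "T0 \<le> s" unfolding T0_def using bddA by (rule cInf_lower)
      then show False using s by simp
    qed
    have frT: "\<gamma> T0 \<in> frontier \<Omega>"
      using g4 T0L op by (auto simp: frontier_def interior_open)
    have adm: "(T0, \<gamma>) \<in> admissible_curves \<Omega> x"
      unfolding admissible_curves_def using T0pos lipb g4 g0 frT inO by auto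
    have cfg: "continuous_on {a..b} (\<lambda>u. f (\<gamma> u))" if "0 \<le> a" for a b
    proof -
      have "continuous_on {a..b} \<gamma>" using continuous_on_subset[OF cgb[of b], of "{a..b}"] that by auto
      then show ?thesis using continuous_on_compose2[OF cf] g4 that by fastforce
    qed
    have ctl: "continuous_on {0..t} (\<lambda>u. l (\<gamma> u))" if t: "t \<in> {0..<T0}" for t
      using continuous_on_compose2[OF cl cgb[of t]] inO t by force
    have mono: "f (\<gamma> T0) \<le> f (\<gamma> t)" if t: "t \<in> {0..T0}" for t
    proof -
      have "- f (\<gamma> t) \<le> - f (\<gamma> T0)"
      proof (rule right_incr[of t T0 "\<lambda>u. - f (\<gamma> u)"])
        show "t \<le> T0" using t by simp
        show "continuous_on {t..T0} (\<lambda>u. - f (\<gamma> u))" using cfg t by (intro continuous_intros) auto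
        fix u assume u: "u \<in> {t..<T0}"
        then have uO: "\<gamma> u \<in> \<Omega>" "u \<ge> 0" using inO t by auto
        then obtain \<rho> where "\<rho> > 0" "\<forall>h. 0 < h \<longrightarrow> h < \<rho> \<longrightarrow> h * (l (\<gamma> u) - l (\<gamma> u)) \<le> f (\<gamma> u) - f (\<gamma> (u + h))"
          using g5 lpos by blast
        then show "\<exists>\<rho>>0. \<forall>h. 0 < h \<longrightarrow> h < \<rho> \<longrightarrow> u + h \<le> T0 \<longrightarrow> - f (\<gamma> u) \<le> - f (\<gamma> (u + h))"
          by (intro exI[of _ \<rho>]) auto
      qed
      then show ?thesis by simp
    qed
    have int_le: "integral {0..t} (\<lambda>u. l (\<gamma> u)) \<le> f x - f (\<gamma> t)" if t: "t \<in> {0..<T0}" for t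
    proof -
      have "integral {0..t} (\<lambda>u. l (\<gamma> u)) \<le> - f (\<gamma> t) - - f (\<gamma> 0)"
      proof (rule compare)
        show "0 \<le> t" using t by simp
        show "continuous_on {0..t} (\<lambda>u. - f (\<gamma> u))" using cfg by (intro continuous_intros) auto
        show "continuous_on {0..t} (\<lambda>u. l (\<gamma> u))" by (rule ctl[OF t])
        fix s \<eta> :: real assume s: "s \<in> {0..<t}" and eta: "\<eta> > 0"
        have "\<gamma> s \<in> \<Omega>" "s \<ge> 0" using s t inO by auto
        then obtain \<rho> where "\<rho> > 0" "\<forall>h. 0 < h \<longrightarrow> h < \<rho> \<longrightarrow> h * (l (\<gamma> s) - \<eta>) \<le> f (\<gamma> s) - f (\<gamma> (s + h))"
          using g5 eta by blast
        then show "\<exists>\<rho>>0. \<forall>h. 0 < h \<longrightarrow> h < \<rho> \<longrightarrow> s + h \<le> t \<longrightarrow> h * (l (\<gamma> s) - \<eta>) \<le> - f (\<gamma> (s + h)) - - f (\<gamma> s)"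
          by (intro exI[of _ \<rho>]) auto
      qed
      then show ?thesis using g0 by simp
    qed
    define V where "V = f x - f (\<gamma> T0)"
    have V0: "V \<ge> 0" using mono[of 0] T0L g0 by (simp add: V_def)
    define I where "I = (\<integral>\<^sup>+ s\<in>{0..T0}. ennreal (l (\<gamma> s)) \<partial>lborel)"
    have IV: "I \<le> ennreal V"
    proof -
      define tk where "tk k = T0 - T0 / (real k + 2)" for k :: nat
      have tk: "tk k \<in> {0..<T0}" for k
        using T0pos by (auto simp: tk_def field_simps)
      have tkm: "tk k \<le> tk k'" if "k \<le> k'" for k k'
        using T0pos that unfolding tk_def by (intro diff_left_mono divide_left_mono) auto
      define u where "u k s = ennreal (l (\<gamma> s)) * indicator {0..tk k} s" for k s
      have inc: "incseq u"
        unfolding incseq_def le_fun_def u_def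
      proof (intro allI impI)
        fix m n :: nat and s assume "m \<le> n"
        then have "tk m \<le> tk n" by (rule tkm)
        then show "ennreal (l (\<gamma> s)) * indicator {0..tk m} s \<le> ennreal (l (\<gamma> s)) * indicator {0..tk n} s"
          by (intro mult_left_mono) (auto simp: indicator_def)
      qed
      have meas: "u k \<in> borel_measurable lborel" for k
      proof -
        have "(\<lambda>s. indicator {0..tk k} s *\<^sub>R l (\<gamma> s)) \<in> borel_measurable borel"
          by (rule borel_measurable_continuous_on_indicator) (use ctl[OF tk[of k]] in auto)
        then have "(\<lambda>s. ennreal (indicator {0..tk k} s *\<^sub>R l (\<gamma> s))) \<in> borel_measurable borel"
          by measurable
        moreover have "(\<lambda>s. ennreal (indicator {0..tk k} s *\<^sub>R l (\<gamma> s))) = u k"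
          by (auto simp: u_def indicator_def fun_eq_iff)
        ultimately show ?thesis by simp
      qed
      have sup: "(SUP k. u k s) = ennreal (l (\<gamma> s)) * indicator {0..<T0} s" for s
      proof (cases "s \<in> {0..<T0}")
        case True
        obtain k :: nat where k: "T0 / (T0 - s) < real k" using reals_Archimedean2 by blast
        have "T0 / (real k + 2) \<le> T0 - s"
        proof -
          have "T0 < real k * (T0 - s)" using k True by (simp add: field_simps)
          then have "T0 \<le> (real k + 2) * (T0 - s)" using True by (simp add: algebra_simps)
          then show ?thesis using True by (simp add: field_simps)
        qed
        then have sk: "s \<in> {0..tk k}" using True by (auto simp: tk_def)
        show ?thesis
        proof (rule antisym)
          show "(SUP k. u k s) \<le> ennreal (l (\<gamma> s)) * indicator {0..<T0} s"
            using True by (intro SUP_least) (auto simp: u_def indicator_def)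
          show "ennreal (l (\<gamma> s)) * indicator {0..<T0} s \<le> (SUP k. u k s)"
            using True sk by (intro SUP_upper2[of k]) (auto simp: u_def indicator_def)
        qed
      next
        case False
        then have "s \<notin> {0..tk k}" for k using tk[of k] by auto
        then show ?thesis using False by (simp add: u_def)
      qed
      have "I = (\<integral>\<^sup>+ s. ennreal (l (\<gamma> s)) * indicator {0..<T0} s \<partial>lborel)"
        unfolding I_def
      proof (rule nn_integral_cong_AE)
        show "AE s in lborel. ennreal (l (\<gamma> s)) * indicator {0..T0} s = ennreal (l (\<gamma> s)) * indicator {0..<T0} s"
          using AE_lborel_singleton[of T0] by eventually_elim (auto simp: indicator_def)
      qed
      also have "\<dots> = (\<integral>\<^sup>+ s. (SUP k. u k s) \<partial>lborel)" by (simp add: sup)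
      also have "\<dots> = (SUP k. integral\<^sup>N lborel (u k))"
        by (rule nn_integral_monotone_convergence_SUP[OF inc meas])
      also have "\<dots> \<le> ennreal V"
      proof (rule SUP_least)
        fix k
        have "integral\<^sup>N lborel (u k) = ennreal (integral {0..tk k} (\<lambda>s. l (\<gamma> s)))"
          unfolding u_def using tk[of k] inO lnn
          by (intro nn_eq ctl) (auto)
        also have "\<dots> \<le> ennreal V"
          using int_le[OF tk[of k]] mono[of "tk k"] tk[of k] by (intro ennreal_leI) (auto simp: V_def)
        finally show "integral\<^sup>N lborel (u k) \<le> ennreal V" .
      qed
      finally show ?thesis .
    qed
    have ge: "ereal (f x) \<le> curve_cost l f T0 \<gamma>" by (rule ug[OF adm])
    have "enn2ereal I \<le> ereal V" using IV V0 by (metis enn2ereal_ennreal less_eq_ennreal.rep_eq)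
    then have le: "curve_cost l f T0 \<gamma> \<le> ereal (f x)"
      unfolding curve_cost_def I_def[symmetric] V_def by (metis add_right_mono plus_ereal.simps(1) diff_add_cancel)
    show ?thesis using adm ge le by (intro bexI[of _ "(T0, \<gamma>)"]) auto
  qed
  have fr: "frontier \<Omega> \<noteq> {}"
  proof -
    obtain x where "x \<in> \<Omega>" using ne by blast
    then obtain T \<gamma> where "(T, \<gamma>) \<in> admissible_curves \<Omega> x" using opt by blast
    then show ?thesis by (auto simp: admissible_curves_def)
  qed
  have inf: "ereal (f x) = (INF (T, \<gamma>)\<in>admissible_curves \<Omega> x. curve_cost l f T \<gamma>)" if x: "x \<in> \<Omega>" for x
  proof (rule antisym)
    show "ereal (f x) \<le> (INF (T, \<gamma>)\<in>admissible_curves \<Omega> x. curve_cost l f T \<gamma>)"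
      using ug by (intro INF_greatest) auto
    obtain T \<gamma> where "(T, \<gamma>) \<in> admissible_curves \<Omega> x" "curve_cost l f T \<gamma> = ereal (f x)" using opt[OF x] by blast
    then show "(INF (T, \<gamma>)\<in>admissible_curves \<Omega> x. curve_cost l f T \<gamma>) \<le> ereal (f x)"
      by (metis (mono_tags, lifting) INF_lower case_prod_conv)
  qed
  show ?thesis using fr inf opt by blast
qed

end
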